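(* In the method U-CS$(\hat x_0,\chi,\lambda_0,\bar\varepsilon)$ described in the context, if at some execution of Step 1 the current stepsize $\lambda$ satisfies \[ \lambda\le\frac{(1-\chi)^2\bar\varepsilon}{4M_f^2+\bar\varepsilon L_f}, \] then the point $x$ computed in Step 1 satisfies the inequality tested in Step 2, i.e. $f(x)-\ell_f(x;\hat x_{k-1})-(1-\chi)\|x-\hat x_{k-1}\|^2/(2\lambda)\le(1-\chi)\bar\varepsilon/2$. Consequently, if $\lambda_0$ is chosen equal to $\frac{(1-\chi)^2\bar\varepsilon}{4M_f^2+\bar\varepsilon L_f}$, then $\lambda$ remains constant throughout the method.
   Context: Setting: $f,h:\mathbb{R}^n\to\mathbb{R}\cup\{+\infty\}$ proper lsc convex with $\mathrm{dom}\, h\subseteq\mathrm{dom}\, f$, $\phi=f+h$, $\phi_*=\inf\phi$ attained. A subgradient oracle $f':\mathrm{dom}\, h\to\mathbb{R}^n$, $f'(x)\in\partial f(x)$, satisfies $\|f'(x)-f'(y)\|\le2M_f+L_f\|x-y\|$ for all $x,y\in\mathrm{dom}\, h$, with $M_f,L_f\ge0$. $\ell_f(u;x):=f(x)+\langle f'(x),u-x\rangle$. U-CS$(\hat x_0,\chi,\lambda_0,\bar\varepsilon)$ with inputs in $\mathrm{dom}\, h\times[0,1)\times\mathbb{R}_{++}\times\mathbb{R}_{++}$: Step 0: $\lambda=\lambda_0$, $k=1$. Step 1: $x=\mathrm{argmin}_u\{\ell_f(u;\hat x_{k-1})+h(u)+\frac1{2\lambda}\|u-\hat x_{k-1}\|^2\}$;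 if $\phi(x)-\phi_*\le\bar\varepsilon$ stop. Step 2: if $f(x)-\ell_f(x;\hat x_{k-1})-(1-\chi)\|x-\hat x_{k-1}\|^2/(2\lambda)\le(1-\chi)\bar\varepsilon/2$ fails, set $\lambda=\lambda/2$ and go to Step 1; else $\lambda_k=\lambda$, $\hat x_k=x$, $k\leftarrow k+1$, go to Step 1. *)

theory Defs
  imports "HOL-Analysis.Analysis" "HOL-Library.Extended_Real"
begin

definition edom :: "('a \<Rightarrow> ereal) \<Rightarrow> 'a set" where
  "edom F = {x. F x < \<infinity>}"

definition eproper :: "('a \<Rightarrow> ereal) \<Rightarrow> bool" where
  "eproper F \<longleftrightarrow> edom F \<noteq> {} \<and> (\<forall>x. F x \<noteq> -\<infinity>)"

definition epigraph :: "('a \<Rightarrow> ereal) \<Rightarrow> ('a \<times> real) set" where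
  "epigraph F = {(x, r). F x \<le> ereal r}"

definition econvex :: "('a::real_vector \<Rightarrow> ereal) \<Rightarrow> bool" where
  "econvex F \<longleftrightarrow> convex (epigraph F)"

definition elsc :: "('a::real_normed_vector \<Rightarrow> ereal) \<Rightarrow> bool" where
  "elsc F \<longleftrightarrow> closed (epigraph F)"

definition subdiff :: "('a::real_inner \<Rightarrow> ereal) \<Rightarrow> 'a \<Rightarrow> 'a set" where
  "subdiff F x = {v. \<forall>u. F u \<ge> F x + ereal (v \<bullet> (u - x))}"

text \<open>ell f g u x = l_f(u;x) = f(x) + <f'(x), u - x>\<close>
definition ell :: "('a::real_inner \<Rightarrow> ereal) \<Rightarrow> ('a \<Rightarrow> 'a) \<Rightarrow> 'a \<Rightarrow> 'a \<Rightarrow> ereal" where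
  "ell f g u x = f x + ereal (g x \<bullet> (u - x))"

definition phistar :: "('a \<Rightarrow> ereal) \<Rightarrow> ('a \<Rightarrow> ereal) \<Rightarrow> ereal" where
  "phistar f h = (INF u. f u + h u)"

text \<open>x is the minimizer of the Step 1 subproblem with prox center y and stepsize lam.\<close>
definition ucs_prox :: "('a::real_inner \<Rightarrow> ereal) \<Rightarrow> ('a \<Rightarrow> ereal) \<Rightarrow> ('a \<Rightarrow> 'a) \<Rightarrow> 'a \<Rightarrow> real \<Rightarrow> 'a \<Rightarrow> bool" where
  "ucs_prox f h g y lam x \<longleftrightarrow>
     (\<forall>u. ell f g x y + h x + ereal (norm (x - y) ^ 2 / (2 * lam))
          \<le> ell f g u y + h u + ereal (norm (u - y) ^ 2 / (2 * lam)))"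

definition ucs_test :: "('a::real_inner \<Rightarrow> ereal) \<Rightarrow> ('a \<Rightarrow> 'a) \<Rightarrow> real \<Rightarrow> real \<Rightarrow> 'a \<Rightarrow> real \<Rightarrow> 'a \<Rightarrow> bool" where
  "ucs_test f g chi eps y lam x \<longleftrightarrow>
     f x - ell f g x y - ereal ((1 - chi) * norm (x - y) ^ 2 / (2 * lam)) \<le> ereal ((1 - chi) * eps / 2)"

text \<open>ucs_state f h g x0 chi lam0 eps y lam: at some execution of Step 1 of
  U-CS(x0,chi,lam0,eps) the prox center is y (= hat x_{k-1}) and the current stepsize is lam.\<close>
inductive ucs_state :: "('a::real_inner \<Rightarrow> ereal) \<Rightarrow> ('a \<Rightarrow> ereal) \<Rightarrow> ('a \<Rightarrow> 'a) \<Rightarrow> 'a \<Rightarrow> real \<Rightarrow> real \<Rightarrow> real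
    \<Rightarrow> 'a \<Rightarrow> real \<Rightarrow> bool"
  for f h g x0 chi lam0 eps where
  init: "ucs_state f h g x0 chi lam0 eps x0 lam0"
| halve: "ucs_state f h g x0 chi lam0 eps y lam \<Longrightarrow> ucs_prox f h g y lam x \<Longrightarrow>
     \<not> (f x + h x - phistar f h \<le> ereal eps) \<Longrightarrow> \<not> ucs_test f g chi eps y lam x \<Longrightarrow>
     ucs_state f h g x0 chi lam0 eps y (lam / 2)"
| accept: "ucs_state f h g x0 chi lam0 eps y lam \<Longrightarrow> ucs_prox f h g y lam x \<Longrightarrow>
     \<not> (f x + h x - phistar f h \<le> ereal eps) \<Longrightarrow> ucs_test f g chi eps y lam x \<Longrightarrow>
     ucs_state f h g x0 chi lam0 eps x lam"

end

theory Submission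
  imports Defs
begin

lemma key_real:
  fixes F :: "'a::real_inner \<Rightarrow> real" and g :: "'a \<Rightarrow> 'a"
  assumes conv: "convex S" and xS: "x \<in> S" and yS: "y \<in> S"
    and sub: "\<forall>z\<in>S. \<forall>u\<in>S. F u \<ge> F z + g z \<bullet> (u - z)"
    and gr: "\<forall>z\<in>S. \<forall>w\<in>S. norm (g z - g w) \<le> 2 * M + L * norm (z - w)"
    and L: "L \<ge> 0"
  shows "F x - F y - g y \<bullet> (x - y) \<le> 2 * M * norm (x - y) + L * norm (x - y)^2 / 2"
proof -
  define r where "r = norm (x - y)"
  define d where "d = x - y"
  have bnd: "F x - F y - g y \<bullet> (x - y) \<le> 2 * M * r + L * r^2 / 2 + L * r^2 / (2 * real N)"
    if N: "N \<ge> 1" for N :: nat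
  proof -
    define z where "z k = y + (real k / real N) *\<^sub>R d" for k :: nat
    have zS: "z k \<in> S" if "k \<le> N" for k
    proof -
      have "z k = (1 - real k / real N) *\<^sub>R y + (real k / real N) *\<^sub>R x"
        by (simp add: z_def d_def algebra_simps)
      moreover have "0 \<le> real k / real N" "real k / real N \<le> 1" using that N by auto
      ultimately show ?thesis using convexD_alt[OF conv yS xS, of "real k / real N"] by simp
    qed
    have ind: "F (z k) - F y - g y \<bullet> (z k - y) \<le> 2 * M * r * real k / real N
        + L * r^2 * real k * (real k + 1) / (2 * real N ^ 2)" if "k \<le> N" for k
      using that
    proof (induction k)
      case 0
      then show ?case by (simp add: z_def)
    next
      case (Suc k)
      have zk: "z k \<in> S" and zk1: "z (Suc k) \<in> S" using zS Suc.prems by auto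
      have "z (Suc k) - z k = (real (Suc k) / real N - real k / real N) *\<^sub>R d"
        unfolding z_def by (simp only: scaleR_diff_left) simp
      also have "real (Suc k) / real N - real k / real N = 1 / real N"
        by (simp add: diff_divide_distrib[symmetric])
      finally have diff0: "z (Suc k) - z k = (1 / real N) *\<^sub>R d" .
      then have diff: "z k - z (Suc k) = - ((1 / real N) *\<^sub>R d)"
        by (metis minus_diff_eq)
      have s0: "F (z k) \<ge> F (z (Suc k)) + g (z (Suc k)) \<bullet> (z k - z (Suc k))"
        using sub zk zk1 by blast
      have s1: "F (z k) \<ge> F (z (Suc k)) - g (z (Suc k)) \<bullet> ((1 / real N) *\<^sub>R d)"
        using s0 unfolding diff by (simp add: inner_minus_right)
      have zy: "z (Suc k) - y = (real (Suc k) / real N) *\<^sub>R d" by (simp add: z_def)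
      have nzy: "norm (z (Suc k) - y) = real (Suc k) / real N * r"
        using N by (simp add: zy r_def d_def)
      have zky: "z (Suc k) - y = z k - y + (1 / real N) *\<^sub>R d"
        using diff0 by (metis add.commute diff_add_cancel add_diff_eq)
      have "(g (z (Suc k)) - g y) \<bullet> ((1 / real N) *\<^sub>R d) \<le> norm (g (z (Suc k)) - g y) * norm ((1 / real N) *\<^sub>R d)"
        by (rule norm_cauchy_schwarz)
      also have "norm ((1 / real N) *\<^sub>R d) = r / real N" by (simp add: r_def d_def)
      also have "norm (g (z (Suc k)) - g y) * (r / real N) \<le> (2 * M + L * (real (Suc k) / real N * r)) * (r / real N)"
      proof (rule mult_right_mono)
        have "norm (g (z (Suc k)) - g y) \<le> 2 * M + L * norm (z (Suc k) - y)" using gr zk1 yS by blast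
        then show "norm (g (z (Suc k)) - g y) \<le> 2 * M + L * (real (Suc k) / real N * r)" using nzy by simp
        show "0 \<le> r / real N" by (simp add: r_def)
      qed
      finally have s2: "(g (z (Suc k)) - g y) \<bullet> ((1 / real N) *\<^sub>R d) \<le> (2 * M + L * (real (Suc k) / real N * r)) * (r / real N)" .
      have IH: "F (z k) - F y - g y \<bullet> (z k - y) \<le> 2 * M * r * real k / real N
        + L * r^2 * real k * (real k + 1) / (2 * real N ^ 2)" using Suc by auto
      have "F (z (Suc k)) - F y - g y \<bullet> (z (Suc k) - y)
          \<le> F (z k) - F y - g y \<bullet> (z k - y) + (g (z (Suc k)) - g y) \<bullet> ((1 / real N) *\<^sub>R d)"
        using s1 zky by (simp add: inner_add_right inner_diff_left algebra_simps)
      also have "\<dots> \<le> 2 * M * r * real k / real N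
        + L * r^2 * real k * (real k + 1) / (2 * real N ^ 2) + (2 * M + L * (real (Suc k) / real N * r)) * (r / real N)"
        using IH s2 by linarith
      also have "\<dots> = 2 * M * r * real (Suc k) / real N
        + L * r^2 * real (Suc k) * (real (Suc k) + 1) / (2 * real N ^ 2)"
        using N by (simp add: field_simps power2_eq_square)
      finally show ?case .
    qed
    have "z N = x" using N by (simp add: z_def d_def)
    then have "F x - F y - g y \<bullet> (x - y) \<le> 2 * M * r * real N / real N
        + L * r^2 * real N * (real N + 1) / (2 * real N ^ 2)" using ind[of N] by simp
    also have "\<dots> = 2 * M * r + L * r^2 / 2 + L * r^2 / (2 * real N)"
      using N by (simp add: field_simps power2_eq_square)
    finally show ?thesis .
  qed
  have gen: "E \<le> c" if "\<And>N::nat. N \<ge> 1 \<Longrightarrow> E \<le> c + K / real N" for E c K :: real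
  proof (rule ccontr)
    assume "\<not> E \<le> c"
    then have pos: "E - c > 0" by simp
    obtain N :: nat where NN: "real N > K / (E - c)"
      using reals_Archimedean2 by blast
    define N' where "N' = max N 1"
    have N1: "N' \<ge> 1" by (simp add: N'_def)
    have "real N' > K / (E - c)" using NN unfolding N'_def by linarith
    then have "K < real N' * (E - c)" using pos by (simp add: divide_less_eq mult.commute)
    then have "K / real N' < E - c" using N1 by (simp add: divide_less_eq mult.commute)
    with that[OF N1] show False by linarith
  qed
  have "F x - F y - g y \<bullet> (x - y) \<le> 2 * M * r + L * r^2 / 2"
    by (rule gen[where K = "L * r^2 / 2"]) (use bnd in simp)
  then show ?thesis by (simp add: r_def)
qed

lemma edom_convex:
  assumes "econvex h" shows "convex (edom h)"
proof (rule convexI)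
  fix x y :: 'a and u v :: real
  assume x: "x \<in> edom h" and y: "y \<in> edom h" and uv: "0 \<le> u" "0 \<le> v" "u + v = 1"
  obtain a where a: "h x \<le> ereal a" using x unfolding edom_def
    by (cases "h x") auto
  obtain b where b: "h y \<le> ereal b" using y unfolding edom_def
    by (cases "h y") auto
  have "(x, a) \<in> epigraph h" "(y, b) \<in> epigraph h" using a b by (auto simp: epigraph_def)
  then have "u *\<^sub>R (x, a) + v *\<^sub>R (y, b) \<in> epigraph h"
    using assms uv unfolding econvex_def convex_def by blast
  then have "h (u *\<^sub>R x + v *\<^sub>R y) \<le> ereal (u * a + v * b)" by (simp add: epigraph_def)
  then show "u *\<^sub>R x + v *\<^sub>R y \<in> edom h" unfolding edom_def
    using order_le_less_trans by fastforce
qed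

theorem lemma2p1:
  fixes f h :: "'a::euclidean_space \<Rightarrow> ereal"
    and g :: "'a \<Rightarrow> 'a"
    and Mf Lf chi lam0 eps :: real
    and x0 :: 'a
  assumes f_cvx: "eproper f" "elsc f" "econvex f"
    and h_cvx: "eproper h" "elsc h" "econvex h"
    and dom: "edom h \<subseteq> edom f"
    and attained: "\<exists>xs. f xs + h xs = phistar f h"
    and subgrad: "\<forall>x\<in>edom h. g x \<in> subdiff f x"
    and growth: "\<forall>x\<in>edom h. \<forall>y\<in>edom h. norm (g x - g y) \<le> 2 * Mf + Lf * norm (x - y)"
    and MfLf: "Mf \<ge> 0" "Lf \<ge> 0"
    and x0: "x0 \<in> edom h"
    and chi: "0 \<le> chi" "chi < 1"
    and lam0: "lam0 > 0"
    and eps: "eps > 0"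
  shows "(\<forall>y lam x. ucs_state f h g x0 chi lam0 eps y lam
              \<and> lam \<le> (1 - chi)^2 * eps / (4 * Mf^2 + eps * Lf)
              \<and> ucs_prox f h g y lam x
            \<longrightarrow> ucs_test f g chi eps y lam x)
       \<and> (lam0 = (1 - chi)^2 * eps / (4 * Mf^2 + eps * Lf)
            \<longrightarrow> (\<forall>y lam. ucs_state f h g x0 chi lam0 eps y lam \<longrightarrow> lam = lam0))"
proof -
  define F where "F z = real_of_ereal (f z)" for z
  define S where "S = edom h"
  have conv: "convex S" unfolding S_def by (rule edom_convex[OF h_cvx(3)])
  have fin: "f z = ereal (F z)" if "z \<in> S" for z
  proof -
    have "f z < \<infinity>" using dom that unfolding S_def edom_def by auto
    moreover have "f z \<noteq> -\<infinity>" using f_cvx(1) unfolding eproper_def by auto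
    ultimately show ?thesis unfolding F_def by (cases "f z") auto
  qed
  have subR: "\<forall>z\<in>S. \<forall>u\<in>S. F u \<ge> F z + g z \<bullet> (u - z)"
  proof (intro ballI)
    fix z u assume z: "z \<in> S" and u: "u \<in> S"
    have "f u \<ge> f z + ereal (g z \<bullet> (u - z))" using subgrad z unfolding S_def subdiff_def by auto
    then show "F u \<ge> F z + g z \<bullet> (u - z)" using fin[OF z] fin[OF u] by simp
  qed
  have grS: "\<forall>z\<in>S. \<forall>w\<in>S. norm (g z - g w) \<le> 2 * Mf + Lf * norm (z - w)"
    using growth unfolding S_def by blast
  have prox_dom: "x \<in> S" if y: "y \<in> S" and p: "ucs_prox f h g y lam x" for y lam x
  proof -
    obtain u where u: "u \<in> edom h" using h_cvx(1) unfolding eproper_def by auto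
    have hu: "h u \<noteq> \<infinity>" "h u \<noteq> -\<infinity>" using u h_cvx(1) unfolding edom_def eproper_def by auto
    have le: "ell f g x y + h x + ereal (norm (x - y) ^ 2 / (2 * lam))
          \<le> ell f g u y + h u + ereal (norm (u - y) ^ 2 / (2 * lam))"
      using p unfolding ucs_prox_def by blast
    have ellx: "ell f g x y = ereal (F y + g y \<bullet> (x - y))" unfolding ell_def using fin[OF y] by simp
    have ellu: "ell f g u y = ereal (F y + g y \<bullet> (u - y))" unfolding ell_def using fin[OF y] by simp
    have "h x \<noteq> \<infinity>"
    proof
      assume "h x = \<infinity>"
      then have lhs: "ell f g x y + h x + ereal (norm (x - y) ^ 2 / (2 * lam)) = \<infinity>" using ellx by simp
      have rhs: "ell f g u y + h u + ereal (norm (u - y) ^ 2 / (2 * lam)) \<noteq> \<infinity>"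
        using ellu hu by (cases "h u") auto
      show False using le lhs rhs by (metis ereal_infty_less_eq(1))
    qed
    then show ?thesis unfolding S_def edom_def by (simp add: less_top)
  qed
  define B where "B = (1 - chi)^2 * eps / (4 * Mf^2 + eps * Lf)"
  have test: "ucs_test f g chi eps y lam x"
    if y: "y \<in> S" and lampos: "lam > 0" and lamB: "lam \<le> B" and p: "ucs_prox f h g y lam x" for y lam x
  proof -
    have x: "x \<in> S" using prox_dom[OF y p] .
    define r where "r = norm (x - y)"
    define a where "a = 1 - chi"
    have a: "0 < a" "a \<le> 1" using chi unfolding a_def by auto
    have D: "F x - F y - g y \<bullet> (x - y) \<le> 2 * Mf * r + Lf * r^2 / 2"
      unfolding r_def by (rule key_real[OF conv x y subR grS MfLf(2)])
    have den: "4 * Mf^2 + eps * Lf > 0"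
    proof (rule ccontr)
      assume "\<not> ?thesis"
      moreover have "4 * Mf^2 + eps * Lf \<ge> 0" using eps MfLf by simp
      ultimately have "4 * Mf^2 + eps * Lf = 0" by linarith
      then have "B \<le> 0" unfolding B_def by simp
      with lampos lamB show False by simp
    qed
    define Q where "Q = 4 * Mf^2 + eps * Lf"
    have Qp: "Q > 0" using den Q_def by simp
    have lamQ: "lam * Q \<le> a^2 * eps" using lamB Qp unfolding B_def Q_def a_def
      by (simp add: le_divide_eq)
    have key: "2 * Mf * r + Lf * r^2 / 2 - a * r^2 / (2 * lam) \<le> a * eps / 2"
    proof -
      have "a * r^2 / (2 * lam) \<ge> r^2 * Q / (2 * a * eps)"
      proof -
        have "r^2 * Q * (2 * lam) \<le> a * r^2 * (2 * a * eps)"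
        proof -
          have "r^2 * (lam * Q) \<le> r^2 * (a^2 * eps)" using lamQ by (simp add: mult_left_mono)
          then show ?thesis by (simp add: power2_eq_square algebra_simps)
        qed
        then show ?thesis using a eps lampos by (simp add: divide_simps, simp add: mult_ac)
      qed
      moreover have "2 * Mf * r + Lf * r^2 / 2 - r^2 * Q / (2 * a * eps) \<le> a * eps / 2"
      proof -
        have e1: "a * eps * Lf * r^2 \<le> eps * Lf * r^2"
          using a eps MfLf by (simp add: mult_right_mono mult_left_mono)
        have e2: "0 \<le> (a * eps - 2 * Mf * r)^2" by simp
        have "(2 * Mf * r + Lf * r^2 / 2) * (2 * a * eps) - r^2 * Q \<le> a * eps / 2 * (2 * a * eps)"
          using e1 e2 unfolding Q_def by (simp add: power2_eq_square algebra_simps)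
        then show ?thesis using a eps by (simp add: divide_simps)
      qed
      ultimately show ?thesis by linarith
    qed
    have "f x - ell f g x y - ereal ((1 - chi) * norm (x - y) ^ 2 / (2 * lam))
        = ereal (F x - F y - g y \<bullet> (x - y) - a * r^2 / (2 * lam))"
      unfolding ell_def a_def r_def using fin[OF x] fin[OF y] by simp
    also have "\<dots> \<le> ereal ((1 - chi) * eps / 2)" using D key a_def by simp
    finally show ?thesis unfolding ucs_test_def .
  qed
  have inv: "y \<in> S \<and> lam > 0 \<and> (lam0 = B \<longrightarrow> lam = lam0)"
    if "ucs_state f h g x0 chi lam0 eps y lam" for y lam
    using that
  proof (induction rule: ucs_state.induct)
    case init
    then show ?case using x0 lam0 unfolding S_def by simp
  next
    case (halve y lam x)
    have "lam0 \<noteq> B"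
    proof
      assume "lam0 = B"
      then have "lam \<le> B" using halve by simp
      then have "ucs_test f g chi eps y lam x" using test halve by blast
      then show False using halve by blast
    qed
    then show ?case using halve by simp
  next
    case (accept y lam x)
    then show ?case using prox_dom by blast
  qed
  show ?thesis
  proof (intro conjI allI impI)
    fix y lam x
    assume "ucs_state f h g x0 chi lam0 eps y lam
              \<and> lam \<le> (1 - chi)^2 * eps / (4 * Mf^2 + eps * Lf)
              \<and> ucs_prox f h g y lam x"
    then show "ucs_test f g chi eps y lam x" using inv test unfolding B_def by blast
  next
    fix y lam
    assume "lam0 = (1 - chi)^2 * eps / (4 * Mf^2 + eps * Lf)"
      "ucs_state f h g x0 chi lam0 eps y lam"
    then show "lam = lam0" using inv unfolding B_def by blast
  qed
qed

end
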